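(* Suppose $a=1$ (so the actual beliefs are updated by the min-protocol at every time step) and conditions (i)–(iii) hold: (i) for every pair of distinct hypotheses $\theta_p,\theta_q$, $\mathcal{S}(\theta_p,\theta_q)\neq\emptyset$; (ii) $\mathcal{G}$ is strongly connected; (iii) $\pi_{i,0}(\theta)>0,\mu_{i,0}(\theta)>0$ for all $i,\theta$. Then for every $i\in\mathcal{V}$, $\mu_{i,t}(\theta^\star)\to1$ a.s., and for every $i\in\mathcal{V}$ and every $\theta\in\Theta\setminus\{\theta^\star\}$, $$\liminf_{t\to\infty}-\frac{\log\mu_{i,t}(\theta)}{t}\ \ge\ \max_{v\in\mathcal{S}(\theta^\star,\theta)}K_v(\theta^\star,\theta)\quad\text{a.s.}$$
   Context: Agents $\mathcal{V}=\{1,\dots,n\}$ interact over a directed graph $\mathcal{G}=(\mathcal{V},\mathcal{E})$; $(j,i)\in\mathcal{E}$ means $j$ can send information to $i$, and $\mathcal{N}_i=\{j:(j,i)\in\mathcal{E}\}$. $\Theta=\{\theta_1,\dots,\theta_m\}$ is a finite set of hypotheses, $\theta^\star\in\Theta$ the fixed true state. Each agent $i$ has a finite signal space $\mathcal{S}_i$ and known marginal likelihoods $l_i(\cdot|\theta)$ of a joint likelihood $l(\cdot|\theta)$ on $\mathcal{S}_1\times\cdots\times\mathcal{S}_n$, with $l_i(w_i|\theta)>0$ for all $w_i,\theta$. Signal profiles $s_t$, $t\in\mathbb{N}_+$, are i.i.d. over time with law $l(\cdot|\theta^\star)$ (possibly correlated across agents); agent $i$ sees $s_{i,t}$. "a.s."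 refers to the product measure $\mathbb{P}^{\theta^\star}$ on sequences of profiles. $K_i(\theta_p,\theta_q)=D(l_i(\cdot|\theta_p)\|l_i(\cdot|\theta_q))$ (KL divergence); $\mathcal{S}(\theta_p,\theta_q)=\{i:K_i(\theta_p,\theta_q)>0\}$. Rule with $a=1$: for all $t\in\mathbb{N}$, $\pi_{i,t+1}(\theta)=\dfrac{l_i(s_{i,t+1}|\theta)\pi_{i,t}(\theta)}{\sum_{p}l_i(s_{i,t+1}|\theta_p)\pi_{i,t}(\theta_p)}$ and $\mu_{i,t+1}(\theta)=\dfrac{\min\{\{\mu_{j,t}(\theta)\}_{j\in\mathcal{N}_i},\pi_{i,t+1}(\theta)\}}{\sum_{p}\min\{\{\mu_{j,t}(\theta_p)\}_{j\in\mathcal{N}_i},\pi_{i,t+1}(\theta_p)\}}$, with initial probability vectors $\boldsymbol\pi_{i,0},\boldsymbol\mu_{i,0}$. *)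

theory Defs
  imports "HOL-Probability.Probability"
begin

text \<open>Signal profiles are functions from agents 'v to a finite signal alphabet 'sig;
  agent i's signal space is S i. L \<theta> is the joint likelihood l(.|\<theta>).\<close>

definition marg_lik :: "('h \<Rightarrow> ('v \<Rightarrow> 'sig) pmf) \<Rightarrow> 'v \<Rightarrow> 'h \<Rightarrow> 'sig \<Rightarrow> real" where
  "marg_lik L i \<theta> w = pmf (map_pmf (\<lambda>s. s i) (L \<theta>)) w"

definition KLdiv :: "('h \<Rightarrow> ('v \<Rightarrow> 'sig) pmf) \<Rightarrow> ('v \<Rightarrow> 'sig set) \<Rightarrow> 'v \<Rightarrow> 'h \<Rightarrow> 'h \<Rightarrow> real" where
  "KLdiv L S i p q = (\<Sum>w\<in>S i. marg_lik L i p w * ln (marg_lik L i p w / marg_lik L i q w))"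

definition informative_agents ::
  "('h \<Rightarrow> ('v \<Rightarrow> 'sig) pmf) \<Rightarrow> ('v \<Rightarrow> 'sig set) \<Rightarrow> 'h \<Rightarrow> 'h \<Rightarrow> 'v set" where
  "informative_agents L S p q = {i. KLdiv L S i p q > 0}"

definition in_nbrs :: "('v \<times> 'v) set \<Rightarrow> 'v \<Rightarrow> 'v set" where
  "in_nbrs E i = {j. (j, i) \<in> E}"

text \<open>Belief dynamics with a = 1. \<open>beliefs \<dots> t = (\<pi>_t, \<mu>_t)\<close>; the signal profile
  s_{t+1} is \<open>\<omega> t\<close>.\<close>
primrec beliefs ::
  "('h::finite \<Rightarrow> ('v \<Rightarrow> 'sig) pmf) \<Rightarrow> ('v \<times> 'v) set \<Rightarrow> ('v \<Rightarrow> 'h \<Rightarrow> real) \<Rightarrow> ('v \<Rightarrow> 'h \<Rightarrow> real)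
    \<Rightarrow> (nat \<Rightarrow> 'v \<Rightarrow> 'sig) \<Rightarrow> nat \<Rightarrow> ('v \<Rightarrow> 'h \<Rightarrow> real) \<times> ('v \<Rightarrow> 'h \<Rightarrow> real)" where
  "beliefs L E \<pi>0 \<mu>0 \<omega> 0 = (\<pi>0, \<mu>0)"
| "beliefs L E \<pi>0 \<mu>0 \<omega> (Suc t) =
     (let \<pi> = fst (beliefs L E \<pi>0 \<mu>0 \<omega> t); \<mu> = snd (beliefs L E \<pi>0 \<mu>0 \<omega> t);
          \<pi>' = (\<lambda>i \<theta>. marg_lik L i \<theta> (\<omega> t i) * \<pi> i \<theta> /
                        (\<Sum>p\<in>UNIV. marg_lik L i p (\<omega> t i) * \<pi> i p));
          m = (\<lambda>i \<theta>. Min (insert (\<pi>' i \<theta>) ((\<lambda>j. \<mu> j \<theta>) ` in_nbrs E i)))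
      in (\<pi>', \<lambda>i \<theta>. m i \<theta> / (\<Sum>p\<in>UNIV. m i p)))"

definition pi_belief where "pi_belief L E \<pi>0 \<mu>0 \<omega> t = fst (beliefs L E \<pi>0 \<mu>0 \<omega> t)"
definition mu_belief where "mu_belief L E \<pi>0 \<mu>0 \<omega> t = snd (beliefs L E \<pi>0 \<mu>0 \<omega> t)"

end

theory Submission
  imports Defs
begin


lemma indep_components:
  fixes P :: "'a pmf"
  shows "prob_space.indep_vars (PiM UNIV (\<lambda>_::nat. measure_pmf P)) (\<lambda>_. measure_pmf P) (\<lambda>i \<omega>. \<omega> i) UNIV"
proof -
  let ?M = "PiM UNIV (\<lambda>_::nat. measure_pmf P)"
  interpret prob_space ?M by (intro prob_space_PiM) (simp add: measure_pmf.prob_space_axioms)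
  show ?thesis
  proof (subst indep_vars_iff_distr_eq_PiM)
    show "distr ?M (Pi\<^sub>M UNIV (\<lambda>_. measure_pmf P)) (\<lambda>x. restrict x UNIV) =
          Pi\<^sub>M UNIV (\<lambda>i. distr ?M (measure_pmf P) (\<lambda>\<omega>. \<omega> i))"
    proof -
      have "distr ?M (Pi\<^sub>M UNIV (\<lambda>_. measure_pmf P)) (\<lambda>x. restrict x UNIV) = distr ?M ?M (\<lambda>x. x)"
        by (intro distr_cong) auto
      also have "\<dots> = ?M" by (rule distr_id)
      also have "\<dots> = Pi\<^sub>M UNIV (\<lambda>i. distr ?M (measure_pmf P) (\<lambda>\<omega>. \<omega> i))"
        by (intro PiM_cong refl distr_PiM_component[symmetric]) (auto simp: measure_pmf.prob_space_axioms)
      finally show ?thesis .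
    qed
  qed auto
qed




lemma slln_eps:
  fixes P :: "'a pmf" and g :: "'a \<Rightarrow> real"
  assumes bnd: "\<And>x. \<bar>g x\<bar> \<le> B" and eps: "\<epsilon> > 0"
  shows "AE \<omega> in PiM UNIV (\<lambda>_::nat. measure_pmf P).
           eventually (\<lambda>n. \<bar>(\<Sum>i<n. g (\<omega> i)) / real n - measure_pmf.expectation P g\<bar> < \<epsilon>) sequentially"
proof -
  let ?M = "PiM UNIV (\<lambda>_::nat. measure_pmf P)"
  interpret prob_space ?M by (intro prob_space_PiM) (simp add: measure_pmf.prob_space_axioms)
  define X where "X = (\<lambda>i (\<omega>::nat \<Rightarrow> 'a). g (\<omega> i))"
  define Y where "Y = (\<lambda>\<omega>::nat \<Rightarrow> 'a. g (\<omega> 0))"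
  define a where "a = - \<bar>B\<bar> - 1"
  define b where "b = \<bar>B\<bar> + 1"
  have ab: "a < b" by (simp add: a_def b_def)
  have indep: "indep_vars (\<lambda>_. borel) X UNIV"
    unfolding X_def
    by (rule indep_vars_compose2[OF indep_components]) auto
  have distrX: "distr ?M borel (X i) = distr (measure_pmf P) borel g" for i
  proof -
    have "distr ?M borel (X i) = distr (distr ?M (measure_pmf P) (\<lambda>\<omega>. \<omega> i)) borel g"
      unfolding X_def by (subst distr_distr) (auto simp: comp_def)
    also have "distr ?M (measure_pmf P) (\<lambda>\<omega>. \<omega> i) = measure_pmf P"
      by (rule distr_PiM_component) (auto simp: measure_pmf.prob_space_axioms)
    finally show ?thesis .
  qed
  have EY: "expectation Y = measure_pmf.expectation P g"
  proof -
    have "expectation Y = integral\<^sup>L (distr ?M (measure_pmf P) (\<lambda>\<omega>. \<omega> 0)) g"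
      unfolding Y_def by (subst integral_distr) (auto intro: measurable_compose[OF measurable_component_singleton[of 0 UNIV]])
    also have "distr ?M (measure_pmf P) (\<lambda>\<omega>. \<omega> 0) = measure_pmf P"
      by (rule distr_PiM_component) (auto simp: measure_pmf.prob_space_axioms)
    finally show ?thesis .
  qed
  define A where "A = (\<lambda>n. {\<omega> \<in> space ?M. \<bar>(\<Sum>i\<in>{..<n}. X i \<omega>) / real n - expectation Y\<bar> \<ge> \<epsilon>})"
  have Ameas: "A n \<in> sets ?M" for n
  proof -
    have [measurable]: "X i \<in> borel_measurable ?M" for i unfolding X_def
      by (rule measurable_compose[OF measurable_component_singleton[of i UNIV]]) auto
    have [measurable]: "Y \<in> borel_measurable ?M" unfolding Y_def
      by (rule measurable_compose[OF measurable_component_singleton[of 0 UNIV]]) auto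
    show ?thesis unfolding A_def by measurable
  qed
  have Abound: "prob (A n) \<le> 2 * exp (-2 * \<epsilon>\<^sup>2 / (b - a)\<^sup>2) ^ n" for n
  proof (cases "n = 0")
    case True
    have "prob (A n) \<le> 1" by (rule prob_le_1)
    then show ?thesis using True by (simp only: power_0 mult_1_right)
  next
    case False
    interpret H: Hoeffding_ineq_iid ?M "{..<n}" X Y a b "expectation Y"
    proof unfold_locales
      show "indep_vars (\<lambda>_. borel) X {..<n}" using indep by (rule indep_vars_subset) auto
      show "distr ?M borel (X i) = distr ?M borel Y" for i
        using distrX[of i] distrX[of 0] by (simp add: X_def Y_def)
      show "random_variable borel Y" unfolding Y_def
        by (rule measurable_compose[OF measurable_component_singleton[of 0 UNIV]]) auto
      show "AE x in ?M. Y x \<in> {a..b}"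
      proof (intro AE_I2)
        fix x :: "nat \<Rightarrow> 'a"
        have "\<bar>g (x 0)\<bar> \<le> B" by (rule bnd)
        then show "Y x \<in> {a..b}" by (auto simp: Y_def a_def b_def)
      qed
    qed auto
    have "prob (A n) \<le> 2 * exp (-2 * real n * \<epsilon>\<^sup>2 / (b - a)\<^sup>2)"
      using H.Hoeffding_ineq_abs_ge'[of \<epsilon>] eps ab False unfolding A_def by auto
    also have "exp (-2 * real n * \<epsilon>\<^sup>2 / (b - a)\<^sup>2) = exp (-2 * \<epsilon>\<^sup>2 / (b - a)\<^sup>2) ^ n"
      by (subst exp_of_nat_mult[symmetric]) (simp add: field_simps)
    finally show ?thesis .
  qed
  have q: "exp (-2 * \<epsilon>\<^sup>2 / (b - a)\<^sup>2) < 1"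
    using eps ab by simp
  have "summable (\<lambda>n. measure ?M (A n))"
  proof (rule summable_comparison_test[where g="\<lambda>n. 2 * exp (-2 * \<epsilon>\<^sup>2 / (b - a)\<^sup>2) ^ n"])
    show "\<exists>N. \<forall>n\<ge>N. norm (measure ?M (A n)) \<le> 2 * exp (-2 * \<epsilon>\<^sup>2 / (b - a)\<^sup>2) ^ n"
      using Abound by auto
    show "summable (\<lambda>n. 2 * exp (-2 * \<epsilon>\<^sup>2 / (b - a)\<^sup>2) ^ n)"
      using q by (intro summable_mult summable_geometric) auto
  qed
  from borel_cantelli_AE1[OF Ameas _ this]
  have "AE \<omega> in ?M. eventually (\<lambda>n. \<omega> \<in> space ?M - A n) sequentially" by (simp add: emeasure_eq_measure)
  then show ?thesis
    by (rule AE_mp) (auto intro!: AE_I2 elim!: eventually_mono simp: A_def X_def EY)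
qed

lemma slln:
  fixes P :: "'a pmf" and g :: "'a \<Rightarrow> real"
  assumes bnd: "\<And>x. \<bar>g x\<bar> \<le> B"
  shows "AE \<omega> in PiM UNIV (\<lambda>_::nat. measure_pmf P).
           (\<lambda>n. (\<Sum>i<n. g (\<omega> i)) / real n) \<longlonglongrightarrow> measure_pmf.expectation P g"
proof -
  have "AE \<omega> in PiM UNIV (\<lambda>_::nat. measure_pmf P). \<forall>k::nat.
           eventually (\<lambda>n. \<bar>(\<Sum>i<n. g (\<omega> i)) / real n - measure_pmf.expectation P g\<bar> < 1 / Suc k) sequentially"
    by (subst AE_all_countable) (intro allI slln_eps[OF bnd]; simp)
  then show ?thesis
  proof (rule AE_mp, intro AE_I2 impI)
    fix \<omega> :: "nat \<Rightarrow> 'a"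
    assume H: "\<forall>k::nat. eventually (\<lambda>n. \<bar>(\<Sum>i<n. g (\<omega> i)) / real n - measure_pmf.expectation P g\<bar> < 1 / Suc k) sequentially"
    show "(\<lambda>n. (\<Sum>i<n. g (\<omega> i)) / real n) \<longlonglongrightarrow> measure_pmf.expectation P g"
    proof (rule tendstoI)
      fix e :: real assume "e > 0"
      then obtain k :: nat where k: "1 / Suc k < e"
        using nat_approx_posE by blast
      show "eventually (\<lambda>n. dist ((\<Sum>i<n. g (\<omega> i)) / real n) (measure_pmf.expectation P g) < e) sequentially"
        using H[rule_format, of k] by eventually_elim (use k in \<open>auto simp: dist_real_def\<close>)
    qed
  qed
qed




locale det =
  fixes L :: "'h::finite \<Rightarrow> ('v::finite \<Rightarrow> 'sig::finite) pmf"
    and S :: "'v \<Rightarrow> 'sig set"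
    and E :: "('v \<times> 'v) set"
    and \<pi>0 \<mu>0 :: "'v \<Rightarrow> 'h \<Rightarrow> real"
    and \<omega> :: "nat \<Rightarrow> 'v \<Rightarrow> 'sig"
  assumes sig: "\<And>t i. \<omega> t i \<in> S i"
    and lik_pos: "\<And>i \<theta> w. w \<in> S i \<Longrightarrow> marg_lik L i \<theta> w > 0"
    and pi0_prob: "\<And>i. (\<Sum>\<theta>\<in>UNIV. \<pi>0 i \<theta>) = 1"
    and mu0_prob: "\<And>i. (\<Sum>\<theta>\<in>UNIV. \<mu>0 i \<theta>) = 1"
    and pos0: "\<And>i \<theta>. \<pi>0 i \<theta> > 0 \<and> \<mu>0 i \<theta> > 0"
begin

definition "pb t = pi_belief L E \<pi>0 \<mu>0 \<omega> t"
definition "mu t = mu_belief L E \<pi>0 \<mu>0 \<omega> t"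
definition "mm t i \<theta> = Min (insert (pb (Suc t) i \<theta>) ((\<lambda>j. mu t j \<theta>) ` in_nbrs E i))"
definition "lk i \<theta> t = marg_lik L i \<theta> (\<omega> t i)"

lemma pb0: "pb 0 = \<pi>0" and mu0: "mu 0 = \<mu>0"
  by (simp_all add: pb_def mu_def pi_belief_def mu_belief_def)

lemma pb_Suc: "pb (Suc t) i \<theta> = lk i \<theta> t * pb t i \<theta> / (\<Sum>p\<in>UNIV. lk i p t * pb t i p)"
  by (simp add: pb_def pi_belief_def lk_def Let_def)

lemma mu_Suc: "mu (Suc t) i \<theta> = mm t i \<theta> / (\<Sum>p\<in>UNIV. mm t i p)"
  by (simp add: pb_def mu_def mm_def pi_belief_def mu_belief_def Let_def)

lemma lk_pos: "lk i \<theta> t > 0"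
  unfolding lk_def by (rule lik_pos[OF sig])

lemma fin_set: "finite (insert (pb (Suc t) i \<theta>) ((\<lambda>j. mu t j \<theta>) ` in_nbrs E i))"
  by simp

lemma mm_le_pi: "mm t i \<theta> \<le> pb (Suc t) i \<theta>"
  unfolding mm_def by (rule Min_le[OF fin_set]) simp

lemma mm_le_mu: "(j, i) \<in> E \<Longrightarrow> mm t i \<theta> \<le> mu t j \<theta>"
  unfolding mm_def by (rule Min_le[OF fin_set]) (simp add: in_nbrs_def)

lemma basic: "(\<forall>i \<theta>. pb t i \<theta> > 0 \<and> mu t i \<theta> > 0) \<and> (\<forall>i. (\<Sum>\<theta>\<in>UNIV. pb t i \<theta>) = 1 \<and> (\<Sum>\<theta>\<in>UNIV. mu t i \<theta>) = 1)"
proof (induction t)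
  case 0
  then show ?case using pos0 pi0_prob mu0_prob by (simp add: pb0 mu0)
next
  case (Suc t)
  have Zpos: "(\<Sum>p\<in>UNIV. lk i p t * pb t i p) > 0" for i
    using Suc lk_pos by (intro sum_pos) auto
  have pipos: "pb (Suc t) i \<theta> > 0" for i \<theta>
    using Suc lk_pos Zpos[of i] unfolding pb_Suc by auto
  have pisum: "(\<Sum>\<theta>\<in>UNIV. pb (Suc t) i \<theta>) = 1" for i
    using Zpos[of i] unfolding pb_Suc by (simp add: sum_divide_distrib[symmetric])
  have mmpos: "mm t i \<theta> > 0" for i \<theta>
    unfolding mm_def using Suc pipos by (subst Min_gr_iff[OF fin_set]) auto
  have Npos: "(\<Sum>p\<in>UNIV. mm t i p) > 0" for i
    using mmpos by (intro sum_pos) auto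
  have mupos: "mu (Suc t) i \<theta> > 0" for i \<theta>
    using mmpos Npos unfolding mu_Suc by auto
  have musum: "(\<Sum>\<theta>\<in>UNIV. mu (Suc t) i \<theta>) = 1" for i
    using Npos[of i] unfolding mu_Suc by (simp add: sum_divide_distrib[symmetric])
  show ?case using pipos pisum mupos musum by auto
qed

lemma pb_pos: "pb t i \<theta> > 0" and mu_pos: "mu t i \<theta> > 0"
  and pb_sum: "(\<Sum>\<theta>\<in>UNIV. pb t i \<theta>) = 1" and mu_sum: "(\<Sum>\<theta>\<in>UNIV. mu t i \<theta>) = 1"
  using basic[of t] by auto

lemma pb_le1: "pb t i \<theta> \<le> 1"
proof -
  have "pb t i \<theta> \<le> (\<Sum>\<theta>\<in>UNIV. pb t i \<theta>)"
    by (rule member_le_sum) (auto intro: less_imp_le pb_pos)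
  then show ?thesis using pb_sum by simp
qed

lemma mu_le1: "mu t i \<theta> \<le> 1"
proof -
  have "mu t i \<theta> \<le> (\<Sum>\<theta>\<in>UNIV. mu t i \<theta>)"
    by (rule member_le_sum) (auto intro: less_imp_le mu_pos)
  then show ?thesis using mu_sum by simp
qed

lemma mm_pos: "mm t i \<theta> > 0"
  unfolding mm_def using pb_pos mu_pos by (subst Min_gr_iff[OF fin_set]) auto

lemma N_le1: "(\<Sum>p\<in>UNIV. mm t i p) \<le> 1"
proof -
  have "(\<Sum>p\<in>UNIV. mm t i p) \<le> (\<Sum>p\<in>UNIV. pb (Suc t) i p)"
    by (intro sum_mono mm_le_pi)
  then show ?thesis using pb_sum by simp
qed

lemma N_ge: "(\<Sum>p\<in>UNIV. mm t i p) \<ge> mm t i \<theta>"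
  by (rule member_le_sum) (auto intro: less_imp_le mm_pos)

lemma mm_ge:
  assumes "pb (Suc t) i \<theta> \<ge> x" "\<And>j. mu t j \<theta> \<ge> x"
  shows "mm t i \<theta> \<ge> x"
  unfolding mm_def using assms by (subst Min_ge_iff[OF fin_set]) auto

lemma logratio:
  "ln (pb t v \<theta>) - ln (pb t v \<theta>s) = ln (\<pi>0 v \<theta>) - ln (\<pi>0 v \<theta>s)
     - (\<Sum>s<t. ln (lk v \<theta>s s) - ln (lk v \<theta> s))"
proof (induction t)
  case 0 then show ?case by (simp add: pb0)
next
  case (Suc t)
  define Z where "Z = (\<Sum>p\<in>UNIV. lk v p t * pb t v p)"
  have Z: "Z > 0" unfolding Z_def using lk_pos pb_pos by (intro sum_pos) auto
  have "ln (pb (Suc t) v \<theta>) = ln (lk v \<theta> t) + ln (pb t v \<theta>) - ln Z" for \<theta>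
    unfolding pb_Suc Z_def[symmetric] using Z lk_pos[of v \<theta> t] pb_pos[of t v \<theta>] by (simp add: ln_div ln_mult)
  then show ?case using Suc by simp
qed

end



definition sublin :: "(nat \<Rightarrow> real) \<Rightarrow> bool" where
  "sublin x \<longleftrightarrow> (\<forall>\<epsilon>>0. \<exists>C. \<forall>t. x t \<le> C + \<epsilon> * real t)"

lemma sublinI: "(\<And>\<epsilon>. \<epsilon> > 0 \<Longrightarrow> \<exists>C. \<forall>t. x t \<le> C + \<epsilon> * real t) \<Longrightarrow> sublin x"
  by (auto simp: sublin_def)

lemma sublinD: "sublin x \<Longrightarrow> \<epsilon> > 0 \<Longrightarrow> \<exists>C. \<forall>t. x t \<le> C + \<epsilon> * real t"
  by (auto simp: sublin_def)

lemma sublin_ev: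
  assumes "\<And>\<epsilon>. \<epsilon> > 0 \<Longrightarrow> \<exists>C. eventually (\<lambda>t. x t \<le> C + \<epsilon> * real t) sequentially"
  shows "sublin x"
proof (rule sublinI)
  fix \<epsilon> :: real assume e: "\<epsilon> > 0"
  obtain C where "eventually (\<lambda>t. x t \<le> C + \<epsilon> * real t) sequentially" using assms[OF e] by blast
  then obtain N where N: "\<And>t. t \<ge> N \<Longrightarrow> x t \<le> C + \<epsilon> * real t" by (auto simp: eventually_sequentially)
  have "x t \<le> (\<bar>C\<bar> + (\<Sum>s<N. \<bar>x s\<bar>)) + \<epsilon> * real t" for t
  proof (cases "t \<ge> N")
    case True
    have "(\<Sum>s<N. \<bar>x s\<bar>) \<ge> 0" by (intro sum_nonneg) auto
    then show ?thesis using N[OF True] by linarith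
  next
    case False
    then have "\<bar>x t\<bar> \<le> (\<Sum>s<N. \<bar>x s\<bar>)" by (intro member_le_sum) auto
    moreover have "\<epsilon> * real t \<ge> 0" using e by auto
    ultimately show ?thesis by linarith
  qed
  then show "\<exists>C. \<forall>t. x t \<le> C + \<epsilon> * real t" by blast
qed

lemma sublin_mono: "sublin y \<Longrightarrow> (\<And>t. x t \<le> y t) \<Longrightarrow> sublin x"
  unfolding sublin_def by (meson order_trans)

lemma sublin_const: "sublin (\<lambda>t. c)"
  unfolding sublin_def by (auto intro!: exI[of _ c])

lemma sublin_add:
  assumes "sublin x" "sublin y" shows "sublin (\<lambda>t. x t + y t)"
proof (rule sublinI)
  fix \<epsilon> :: real assume e: "\<epsilon> > 0"
  obtain C1 where 1: "\<forall>t. x t \<le> C1 + \<epsilon>/2 * real t" using sublinD[OF assms(1), of "\<epsilon>/2"] e by auto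
  obtain C2 where 2: "\<forall>t. y t \<le> C2 + \<epsilon>/2 * real t" using sublinD[OF assms(2), of "\<epsilon>/2"] e by auto
  have "x t + y t \<le> (C1 + C2) + \<epsilon> * real t" for t
    using 1[rule_format, of t] 2[rule_format, of t] by (simp add: algebra_simps)
  then show "\<exists>C. \<forall>t. x t + y t \<le> C + \<epsilon> * real t" by blast
qed

lemma sublin_sum:
  assumes "finite I" "\<And>i. i \<in> I \<Longrightarrow> sublin (x i)"
  shows "sublin (\<lambda>t. \<Sum>i\<in>I. x i t)"
  using assms by (induction I rule: finite_induct) (auto intro: sublin_const sublin_add)

lemma sublin_max0: "sublin x \<Longrightarrow> sublin (\<lambda>t. max 0 (x t))"
proof (rule sublinI)
  fix \<epsilon> :: real assume "sublin x" and e: "\<epsilon> > 0"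
  then obtain C where "\<forall>t. x t \<le> C + \<epsilon> * real t" using sublinD by blast
  then have "max 0 (x t) \<le> max 0 C + \<epsilon> * real t" for t using e
    by (smt (verit) mult_nonneg_nonneg of_nat_0_le_iff)
  then show "\<exists>C. \<forall>t. max 0 (x t) \<le> C + \<epsilon> * real t" by blast
qed

lemma sublin_Suc: "sublin x \<Longrightarrow> sublin (\<lambda>t. x (Suc t))"
proof (rule sublinI)
  fix \<epsilon> :: real assume "sublin x" and e: "\<epsilon> > 0"
  then obtain C where "\<forall>t. x t \<le> C + \<epsilon> * real t" using sublinD by blast
  then have "x (Suc t) \<le> (C + \<epsilon>) + \<epsilon> * real t" for t
    by (metis add.commute add.left_commute distrib_left mult.right_neutral of_nat_Suc)
  then show "\<exists>C. \<forall>t. x (Suc t) \<le> C + \<epsilon> * real t" by blast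
qed

lemma sublin_unSuc: "sublin (\<lambda>t. x (Suc t)) \<Longrightarrow> sublin x"
proof (rule sublinI)
  fix \<epsilon> :: real assume "sublin (\<lambda>t. x (Suc t))" and e: "\<epsilon> > 0"
  then obtain C where C: "\<forall>t. x (Suc t) \<le> C + \<epsilon> * real t" using sublinD by blast
  have "x t \<le> max C (x 0) + \<epsilon> * real t" for t
  proof (cases t)
    case 0 then show ?thesis by simp
  next
    case (Suc s)
    then show ?thesis using C[rule_format, of s] e by (simp add: distrib_left)
  qed
  then show "\<exists>C. \<forall>t. x t \<le> C + \<epsilon> * real t" by blast
qed

lemma sublin_rec:
  assumes rec: "\<And>t. x (Suc t) \<le> max (x t) (y (Suc t))" and y: "sublin y"
  shows "sublin x"
proof (rule sublinI)
  fix \<epsilon> :: real assume e: "\<epsilon> > 0"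
  obtain C where C: "\<forall>t. y t \<le> C + \<epsilon> * real t" using sublinD[OF y e] by blast
  have "x t \<le> max C (x 0) + \<epsilon> * real t" for t
  proof (induction t)
    case 0 then show ?case by simp
  next
    case (Suc t)
    have "x (Suc t) \<le> max (x t) (y (Suc t))" by (rule rec)
    moreover have "\<epsilon> * real t \<le> \<epsilon> * real (Suc t)" using e by simp
    ultimately show ?case using Suc C[rule_format, of "Suc t"] by auto
  qed
  then show "\<exists>C. \<forall>t. x t \<le> C + \<epsilon> * real t" by blast
qed

lemma sublin_avg:
  assumes "(\<lambda>t. y t / real t) \<longlonglongrightarrow> K"
  shows "sublin (\<lambda>t. K * real t - y t)"
proof (rule sublin_ev)
  fix \<epsilon> :: real assume e: "\<epsilon> > 0"
  have "eventually (\<lambda>t. dist (y t / real t) K < \<epsilon>) sequentially"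
    using tendstoD[OF assms e] .
  moreover have "eventually (\<lambda>t. t \<ge> 1) sequentially" by (rule eventually_ge_at_top)
  ultimately have "eventually (\<lambda>t. K * real t - y t \<le> 0 + \<epsilon> * real t) sequentially"
  proof eventually_elim
    case (elim t)
    then have t: "real t > 0" by simp
    have "K - y t / real t < \<epsilon>" using elim by (auto simp: dist_real_def)
    then have "(K - y t / real t) * real t \<le> \<epsilon> * real t" using t by (intro mult_right_mono) auto
    then show ?case using t by (simp add: algebra_simps)
  qed
  then show "\<exists>C. eventually (\<lambda>t. K * real t - y t \<le> C + \<epsilon> * real t) sequentially" by blast
qed

lemma sublin_liminf:
  assumes "sublin (\<lambda>t. K * real t - d t)"
  shows "ereal K \<le> Liminf sequentially (\<lambda>t. ereal (d t / real t))"
proof (subst le_Liminf_iff, intro allI impI)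
  fix y :: ereal assume "y < ereal K"
  then obtain y' where y': "y = ereal y' \<or> y = - \<infinity>" "y' < K"
  proof (cases y)
    case (real r) then show ?thesis using that[of r] \<open>y < ereal K\<close> by auto
  next
    case MInf then show ?thesis using that[of "K - 1"] by auto
  qed (use \<open>y < ereal K\<close> in auto)
  define \<epsilon> where "\<epsilon> = (K - y') / 2"
  have e: "\<epsilon> > 0" using y' by (simp add: \<epsilon>_def)
  obtain C where C: "\<forall>t. K * real t - d t \<le> C + \<epsilon> * real t" using sublinD[OF assms e] by blast
  have "eventually (\<lambda>t. real t \<ge> real (nat \<lceil>\<bar>C\<bar> / \<epsilon>\<rceil> + 1)) sequentially"
    by (rule eventually_mono[OF eventually_ge_at_top[of "nat \<lceil>\<bar>C\<bar> / \<epsilon>\<rceil> + 1"]]) auto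
  then show "eventually (\<lambda>t. y < ereal (d t / real t)) sequentially"
  proof eventually_elim
    case (elim t)
    have "real (nat \<lceil>\<bar>C\<bar> / \<epsilon>\<rceil>) \<ge> \<bar>C\<bar> / \<epsilon>" by linarith
    then have "real t > \<bar>C\<bar> / \<epsilon>" using elim by simp
    then have t: "\<epsilon> * real t > \<bar>C\<bar>" using e by (simp add: field_simps)
    then have tpos: "real t > 0" using e by (smt (verit) mult_nonneg_nonpos of_nat_0_le_iff)
    have "d t \<ge> K * real t - C - \<epsilon> * real t" using C[rule_format, of t] by linarith
    then have "d t > (K - 2 * \<epsilon>) * real t" using t by (simp add: algebra_simps)
    then have "d t / real t > K - 2 * \<epsilon>" using tpos by (simp add: field_simps)
    moreover have "2 * \<epsilon> = K - y'" by (simp add: \<epsilon>_def)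
    ultimately have "d t / real t > y'" by simp
    then show ?case using y' by auto
  qed
qed

lemma sublin_exp_lim:
  assumes "sublin (\<lambda>t. K * real t - d t)" "K > 0"
  shows "(\<lambda>t. exp (- d t)) \<longlonglongrightarrow> 0"
proof -
  obtain C where C: "\<forall>t. K * real t - d t \<le> C + K / 2 * real t"
    using sublinD[OF assms(1), of "K/2"] assms(2) by auto
  have bound: "exp (- d t) \<le> exp C * exp (- K / 2) ^ t" for t
  proof -
    have "- d t \<le> C + (- K / 2) * real t" using C[rule_format, of t] by (simp add: algebra_simps)
    then have "exp (- d t) \<le> exp (C + (- K / 2) * real t)" by simp
    also have "\<dots> = exp C * exp (real t * (- K / 2))"
      by (simp only: exp_add mult.commute)
    also have "exp (real t * (- K / 2)) = exp (- K / 2) ^ t"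
      by (rule exp_of_nat_mult)
    finally show ?thesis .
  qed
  have "(\<lambda>t. exp C * exp (- K / 2) ^ t) \<longlonglongrightarrow> exp C * 0"
    using assms(2) by (intro tendsto_mult tendsto_const LIMSEQ_power_zero) auto
  then have lim: "(\<lambda>t. exp C * exp (- K / 2) ^ t) \<longlonglongrightarrow> 0" by simp
  show ?thesis
  proof (rule tendsto_sandwich[of "\<lambda>_. 0" _ _ "\<lambda>t. exp C * exp (- K / 2) ^ t"])
    show "eventually (\<lambda>t. 0 \<le> exp (- d t)) sequentially" by simp
    show "eventually (\<lambda>t. exp (- d t) \<le> exp C * exp (- K / 2) ^ t) sequentially"
      using bound by (intro always_eventually) blast
  qed (rule tendsto_const, rule lim)
qed




locale det2 = det L S E \<pi>0 \<mu>0 \<omega>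
  for L :: "'h::finite \<Rightarrow> ('v::finite \<Rightarrow> 'sig::finite) pmf" and S E \<pi>0 \<mu>0 \<omega> +
  fixes \<theta>s :: 'h and Kd :: "'v \<Rightarrow> 'h \<Rightarrow> real"
  assumes avg: "\<And>v \<theta>. (\<lambda>n. (\<Sum>s<n. ln (lk v \<theta>s s) - ln (lk v \<theta> s)) / real n) \<longlonglongrightarrow> Kd v \<theta>"
    and Kd_nonneg: "\<And>v \<theta>. Kd v \<theta> \<ge> 0"
    and strong: "\<And>i j. (i, j) \<in> E\<^sup>*"
begin

definition "rs v \<theta> t = (\<Sum>s<t. ln (lk v \<theta>s s) - ln (lk v \<theta> s))"
definition "a t i = - ln (pb t i \<theta>s)"
definition "AA t = (\<Sum>i\<in>UNIV. a t i)"
definition "b t = Max (range (\<lambda>i. - ln (mu t i \<theta>s)))"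
definition "X t = max (b t) (AA (Suc t))"

lemma rs_sublin: "sublin (\<lambda>t. Kd v \<theta> * real t - rs v \<theta> t)"
  unfolding rs_def by (rule sublin_avg[OF avg])

lemma rs_sublin': "sublin (\<lambda>t. - rs v \<theta> t)"
  by (rule sublin_mono[OF rs_sublin[of v \<theta>]]) (use Kd_nonneg[of v \<theta>] in auto)

lemma a_nonneg: "a t i \<ge> 0"
  unfolding a_def using pb_pos pb_le1 by (simp add: ln_le_zero_iff)

lemma a_le_AA: "a t i \<le> AA t"
  unfolding AA_def by (rule member_le_sum) (auto intro: a_nonneg)

lemma a_sublin: "sublin (\<lambda>t. a t v)"
proof -
  define D where "D t \<theta> = ln (pb t v \<theta>) - ln (pb t v \<theta>s)" for t \<theta>
  have D_eq: "D t \<theta> = (ln (\<pi>0 v \<theta>) - ln (\<pi>0 v \<theta>s)) + - rs v \<theta> t" for t \<theta>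
    unfolding D_def rs_def using logratio[of t v \<theta> \<theta>s] by simp
  define Mx where "Mx t = (\<Sum>\<theta>\<in>UNIV. max 0 (D t \<theta>))" for t
  have "sublin Mx" unfolding Mx_def D_eq
    by (intro sublin_sum sublin_max0 sublin_add sublin_const rs_sublin') auto
  moreover have "a t v \<le> ln (real CARD('h)) + Mx t" for t
  proof -
    have pbeq: "pb t v \<theta> = pb t v \<theta>s * exp (D t \<theta>)" for \<theta>
      unfolding D_def using pb_pos[of t v \<theta>s] pb_pos[of t v \<theta>] by (simp add: exp_diff)
    have "1 = (\<Sum>\<theta>\<in>UNIV. pb t v \<theta>)" using pb_sum by simp
    also have "\<dots> = pb t v \<theta>s * (\<Sum>\<theta>\<in>UNIV. exp (D t \<theta>))"
      by (subst pbeq) (simp add: sum_distrib_left)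
    finally have one: "1 = pb t v \<theta>s * (\<Sum>\<theta>\<in>UNIV. exp (D t \<theta>))" .
    have Spos: "(\<Sum>\<theta>\<in>UNIV. exp (D t \<theta>)) > 0" by (intro sum_pos) auto
    have aeq: "a t v = ln (\<Sum>\<theta>\<in>UNIV. exp (D t \<theta>))"
      unfolding a_def using one pb_pos[of t v \<theta>s] Spos
      by (metis ln_div ln_one diff_0 divide_eq_eq less_numeral_extra(3) nonzero_mult_div_cancel_left zero_less_one)
    have Mx0: "max 0 (D t \<theta>) \<le> Mx t" for \<theta>
      unfolding Mx_def by (rule member_le_sum) auto
    have "(\<Sum>\<theta>\<in>UNIV. exp (D t \<theta>)) \<le> (\<Sum>\<theta>\<in>(UNIV::'h set). exp (Mx t))"
      using Mx0 by (intro sum_mono) (smt (verit) exp_le_cancel_iff)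
    also have "\<dots> = real CARD('h) * exp (Mx t)" by simp
    finally have "ln (\<Sum>\<theta>\<in>UNIV. exp (D t \<theta>)) \<le> ln (real CARD('h) * exp (Mx t))"
      using Spos by (intro ln_mono) auto
    also have "\<dots> = ln (real CARD('h)) + Mx t" by (simp add: ln_mult)
    finally show ?thesis using aeq by simp
  qed
  ultimately show ?thesis
    using sublin_mono[of "\<lambda>t. ln (real CARD('h)) + Mx t" "\<lambda>t. a t v"] sublin_add[OF sublin_const, of Mx "ln (real CARD('h))"]
    by blast
qed

lemma AA_sublin: "sublin AA"
  unfolding AA_def by (intro sublin_sum a_sublin) auto

lemma b_ge: "- ln (mu t i \<theta>s) \<le> b t"
  unfolding b_def by (rule Max_ge) auto

lemma b_nonneg: "b t \<ge> 0"
  using b_ge[of t undefined] mu_pos[of t undefined \<theta>s] mu_le1[of t undefined \<theta>s]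
  by (smt (verit) ln_le_zero_iff)

lemma mm_lower: "- ln (mm t i \<theta>s) \<le> X t"
proof -
  have "mm t i \<theta>s \<ge> exp (- X t)"
  proof (rule mm_ge)
    have "a (Suc t) i \<le> X t" unfolding X_def using a_le_AA[of "Suc t" i] by linarith
    then show "exp (- X t) \<le> pb (Suc t) i \<theta>s"
      unfolding a_def using pb_pos[of "Suc t" i \<theta>s]
      by (metis exp_le_cancel_iff exp_ln minus_le_iff)
    fix j
    have "- ln (mu t j \<theta>s) \<le> X t" unfolding X_def using b_ge[of t j] by linarith
    then show "exp (- X t) \<le> mu t j \<theta>s"
      using mu_pos[of t j \<theta>s]
      by (metis exp_le_cancel_iff exp_ln minus_le_iff)
  qed
  then have "ln (exp (- X t)) \<le> ln (mm t i \<theta>s)" using mm_pos by (intro ln_mono) auto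
  then show ?thesis by simp
qed

lemma lnN: "- ln (\<Sum>p\<in>UNIV. mm t i p) \<le> X t"
proof -
  have "ln (mm t i \<theta>s) \<le> ln (\<Sum>p\<in>UNIV. mm t i p)"
    using mm_pos N_ge by (intro ln_mono) auto
  then show ?thesis using mm_lower[of t i] by linarith
qed

lemma b_rec: "b (Suc t) \<le> max (b t) (AA (Suc t))"
proof -
  have "- ln (mu (Suc t) i \<theta>s) \<le> X t" for i
  proof -
    have N: "(\<Sum>p\<in>UNIV. mm t i p) > 0" using mm_pos by (intro sum_pos) auto
    have "- ln (mu (Suc t) i \<theta>s) = - ln (mm t i \<theta>s) + ln (\<Sum>p\<in>UNIV. mm t i p)"
      unfolding mu_Suc using mm_pos[of t i \<theta>s] N by (simp add: ln_div)
    moreover have "ln (\<Sum>p\<in>UNIV. mm t i p) \<le> 0" using N N_le1 by (simp add: ln_le_zero_iff)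
    ultimately show ?thesis using mm_lower[of t i] by linarith
  qed
  then show ?thesis unfolding X_def b_def[of "Suc t"] by (subst Max_le_iff) auto
qed

lemma b_sublin: "sublin b"
  by (rule sublin_rec[OF b_rec AA_sublin])

lemma X_sublin: "sublin X"
proof (rule sublin_mono[of "\<lambda>t. b t + AA (Suc t)"])
  show "sublin (\<lambda>t. b t + AA (Suc t))" by (intro sublin_add b_sublin sublin_Suc AA_sublin)
  show "X t \<le> b t + AA (Suc t)" for t
    unfolding X_def using b_nonneg[of t] a_le_AA[of "Suc t" undefined] a_nonneg[of "Suc t" undefined] by linarith
qed

definition "d t i \<theta> = - ln (mu t i \<theta>)"

lemma d_step: "- ln (mm t i \<theta>) - X t \<le> d (Suc t) i \<theta>"
proof -
  have N: "(\<Sum>p\<in>UNIV. mm t i p) > 0" using mm_pos by (intro sum_pos) auto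
  have "d (Suc t) i \<theta> = - ln (mm t i \<theta>) + ln (\<Sum>p\<in>UNIV. mm t i p)"
    unfolding d_def mu_Suc using mm_pos[of t i \<theta>] N by (simp add: ln_div)
  then show ?thesis using lnN[of t i] by linarith
qed

lemma mm_pb: "- ln (pb (Suc t) i \<theta>) \<le> - ln (mm t i \<theta>)"
  using mm_le_pi[of t i \<theta>] mm_pos[of t i \<theta>] by simp

lemma mm_mu: "(j, i) \<in> E \<Longrightarrow> - ln (mu t j \<theta>) \<le> - ln (mm t i \<theta>)"
  using mm_le_mu[of j i t \<theta>] mm_pos[of t i \<theta>] by simp

lemma e_lower: "rs v \<theta> t - (ln (\<pi>0 v \<theta>) - ln (\<pi>0 v \<theta>s)) \<le> - ln (pb t v \<theta>)"
proof -
  have "ln (pb t v \<theta>s) \<le> 0" using pb_pos pb_le1 by (simp add: ln_le_zero_iff)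
  then show ?thesis using logratio[of t v \<theta> \<theta>s] unfolding rs_def by linarith
qed

lemma G_reach:
  assumes "(v, i) \<in> E\<^sup>*"
  shows "sublin (\<lambda>t. Kd v \<theta> * real t - d t i \<theta>)"
  using assms
proof (induction rule: rtrancl_induct)
  case base
  show ?case
  proof (rule sublin_unSuc, rule sublin_mono)
    let ?c = "ln (\<pi>0 v \<theta>) - ln (\<pi>0 v \<theta>s)"
    show "sublin (\<lambda>t. (Kd v \<theta> * real (Suc t) - rs v \<theta> (Suc t)) + (?c + X t))"
      by (intro sublin_add sublin_Suc[OF rs_sublin] sublin_const X_sublin)
    show "Kd v \<theta> * real (Suc t) - d (Suc t) v \<theta> \<le> (Kd v \<theta> * real (Suc t) - rs v \<theta> (Suc t)) + (?c + X t)" for t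
      using d_step[of t v \<theta>] mm_pb[of t v \<theta>] e_lower[of v \<theta> "Suc t"] by linarith
  qed
next
  case (step j i)
  show ?case
  proof (rule sublin_unSuc, rule sublin_mono)
    show "sublin (\<lambda>t. Kd v \<theta> + (Kd v \<theta> * real t - d t j \<theta>) + X t)"
      by (intro sublin_add sublin_const step.IH X_sublin)
    show "Kd v \<theta> * real (Suc t) - d (Suc t) i \<theta> \<le> Kd v \<theta> + (Kd v \<theta> * real t - d t j \<theta>) + X t" for t
      using d_step[of t i \<theta>] mm_mu[OF step.hyps(2), of t \<theta>] unfolding d_def by (simp add: algebra_simps)
  qed
qed

lemma rate: "ereal (Kd v \<theta>) \<le> Liminf sequentially (\<lambda>t. ereal (- ln (mu t i \<theta>) / real t))"
  using sublin_liminf[OF G_reach[OF strong[of v i], of \<theta>]] unfolding d_def .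

lemma mu_zero:
  assumes "Kd v \<theta> > 0"
  shows "(\<lambda>t. mu t i \<theta>) \<longlonglongrightarrow> 0"
proof -
  have "(\<lambda>t. exp (- d t i \<theta>)) \<longlonglongrightarrow> 0"
    by (rule sublin_exp_lim[OF G_reach[OF strong[of v i]] assms])
  moreover have "exp (- d t i \<theta>) = mu t i \<theta>" for t
    unfolding d_def using mu_pos[of t i \<theta>] by simp
  ultimately show ?thesis by simp
qed

lemma mu_one:
  assumes "\<And>\<theta>. \<theta> \<noteq> \<theta>s \<Longrightarrow> \<exists>v. Kd v \<theta> > 0"
  shows "(\<lambda>t. mu t i \<theta>s) \<longlonglongrightarrow> 1"
proof -
  have z: "(\<lambda>t. mu t i \<theta>) \<longlonglongrightarrow> 0" if "\<theta> \<in> UNIV - {\<theta>s}" for \<theta>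
    using assms[of \<theta>] that mu_zero by auto
  have "(\<lambda>t. 1 - (\<Sum>\<theta>\<in>UNIV - {\<theta>s}. mu t i \<theta>)) \<longlonglongrightarrow> 1 - (\<Sum>\<theta>\<in>UNIV - {\<theta>s}. (0::real))"
    by (intro tendsto_diff tendsto_const tendsto_sum z)
  moreover have "1 - (\<Sum>\<theta>\<in>UNIV - {\<theta>s}. mu t i \<theta>) = mu t i \<theta>s" for t
    using mu_sum[of t i] sum.remove[of UNIV \<theta>s "mu t i"] by simp
  ultimately show ?thesis by simp
qed

end



lemma KL_expect:
  fixes L :: "'h::finite \<Rightarrow> ('v::finite \<Rightarrow> 'sig::finite) pmf"
  assumes supp: "\<And>\<theta>. set_pmf (L \<theta>) \<subseteq> {s. \<forall>i. s i \<in> S i}"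
    and lik_pos: "\<And>i \<theta> w. w \<in> S i \<Longrightarrow> marg_lik L i \<theta> w > 0"
  shows "measure_pmf.expectation (L \<theta>s) (\<lambda>x. ln (marg_lik L v \<theta>s (x v)) - ln (marg_lik L v \<theta> (x v)))
         = KLdiv L S v \<theta>s \<theta>"
proof -
  let ?h = "\<lambda>w. ln (marg_lik L v \<theta>s w) - ln (marg_lik L v \<theta> w)"
  let ?P = "map_pmf (\<lambda>s. s v) (L \<theta>s)"
  have "measure_pmf.expectation (L \<theta>s) (\<lambda>x. ?h (x v)) = measure_pmf.expectation ?P ?h"
    by simp
  also have "\<dots> = (\<Sum>w\<in>S v. pmf ?P w *\<^sub>R ?h w)"
    by (rule integral_measure_pmf) (use supp in auto)
  also have "\<dots> = KLdiv L S v \<theta>s \<theta>"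
    unfolding KLdiv_def
  proof (intro sum.cong refl)
    fix w assume w: "w \<in> S v"
    have "pmf ?P w = marg_lik L v \<theta>s w" by (simp add: marg_lik_def)
    then show "pmf ?P w *\<^sub>R ?h w = marg_lik L v \<theta>s w * ln (marg_lik L v \<theta>s w / marg_lik L v \<theta> w)"
      using lik_pos[OF w, of \<theta>s] lik_pos[OF w, of \<theta>] by (simp add: ln_div)
  qed
  finally show ?thesis .
qed

lemma KL_nonneg:
  fixes L :: "'h::finite \<Rightarrow> ('v::finite \<Rightarrow> 'sig::finite) pmf"
  assumes supp: "\<And>\<theta>. set_pmf (L \<theta>) \<subseteq> {s. \<forall>i. s i \<in> S i}"
    and lik_pos: "\<And>i \<theta> w. w \<in> S i \<Longrightarrow> marg_lik L i \<theta> w > 0"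
  shows "KLdiv L S v p q \<ge> 0"
proof -
  let ?p = "marg_lik L v p" and ?q = "marg_lik L v q"
  have "(\<Sum>w\<in>S v. ?p w - ?q w) \<le> KLdiv L S v p q"
    unfolding KLdiv_def
  proof (rule sum_mono)
    fix w assume w: "w \<in> S v"
    have pp: "?p w > 0" and qq: "?q w > 0" using lik_pos[OF w] by auto
    have "ln (?q w / ?p w) \<le> ?q w / ?p w - 1" using pp qq by (intro ln_le_minus_one) auto
    then have "?p w * ln (?q w / ?p w) \<le> ?p w * (?q w / ?p w - 1)" using pp by (intro mult_left_mono) auto
    moreover have "ln (?q w / ?p w) = - ln (?p w / ?q w)" using pp qq by (simp add: ln_div)
    moreover have "?p w * (?q w / ?p w - 1) = ?q w - ?p w" using pp by (simp add: field_simps)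
    ultimately show "?p w - ?q w \<le> ?p w * ln (?p w / ?q w)" by simp
  qed
  moreover have "(\<Sum>w\<in>S v. ?p w) = 1"
    unfolding marg_lik_def by (rule sum_pmf_eq_1) (use supp in auto)
  moreover have "(\<Sum>w\<in>S v. ?q w) \<le> 1"
    unfolding marg_lik_def using measure_measure_pmf_finite[of "S v" "map_pmf (\<lambda>s. s v) (L q)"]
    by (metis finite measure_pmf.prob_le_1)
  ultimately show ?thesis by (simp add: sum_subtractf)
qed

theorem corollary1:
  fixes L :: "'h::finite \<Rightarrow> ('v::finite \<Rightarrow> 'sig::finite) pmf"
    and S :: "'v \<Rightarrow> 'sig set"
    and E :: "('v \<times> 'v) set"
    and \<theta>s :: 'h
    and \<pi>0 \<mu>0 :: "'v \<Rightarrow> 'h \<Rightarrow> real"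
  assumes supp: "\<And>\<theta>. set_pmf (L \<theta>) \<subseteq> {s. \<forall>i. s i \<in> S i}"
    and lik_pos: "\<And>i \<theta> w. w \<in> S i \<Longrightarrow> marg_lik L i \<theta> w > 0"
    and pi0_prob: "\<And>i. (\<Sum>\<theta>\<in>UNIV. \<pi>0 i \<theta>) = 1"
    and mu0_prob: "\<And>i. (\<Sum>\<theta>\<in>UNIV. \<mu>0 i \<theta>) = 1"
    and ident: "\<And>p q. p \<noteq> q \<Longrightarrow> informative_agents L S p q \<noteq> {}"
    and strong: "\<And>i j. (i, j) \<in> E\<^sup>*"
    and pos0: "\<And>i \<theta>. \<pi>0 i \<theta> > 0 \<and> \<mu>0 i \<theta> > 0"
  shows "(\<forall>i. AE \<omega> in PiM UNIV (\<lambda>_::nat. measure_pmf (L \<theta>s)).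
              (\<lambda>t. mu_belief L E \<pi>0 \<mu>0 \<omega> t i \<theta>s) \<longlonglongrightarrow> 1)
       \<and> (\<forall>i \<theta>. \<theta> \<noteq> \<theta>s \<longrightarrow>
            (AE \<omega> in PiM UNIV (\<lambda>_::nat. measure_pmf (L \<theta>s)).
              Liminf sequentially (\<lambda>t. ereal (- ln (mu_belief L E \<pi>0 \<mu>0 \<omega> t i \<theta>) / real t))
                \<ge> ereal (Max ((\<lambda>v. KLdiv L S v \<theta>s \<theta>) ` informative_agents L S \<theta>s \<theta>))))"
proof -
  let ?M = "PiM UNIV (\<lambda>_::nat. measure_pmf (L \<theta>s))"
  define g where "g v \<theta> x = ln (marg_lik L v \<theta>s (x v)) - ln (marg_lik L v \<theta> (x v))"
    for v :: 'v and \<theta> :: 'h and x :: "'v \<Rightarrow> 'sig"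
  have AE1: "AE \<omega> in ?M. \<forall>t. \<omega> t \<in> set_pmf (L \<theta>s)"
    by (subst AE_all_countable, intro allI AE_PiM_component)
       (auto simp: measure_pmf.prob_space_axioms AE_measure_pmf_iff)
  have AE2: "AE \<omega> in ?M. \<forall>v \<theta>. (\<lambda>n. (\<Sum>s<n. g v \<theta> (\<omega> s)) / real n) \<longlonglongrightarrow> KLdiv L S v \<theta>s \<theta>"
  proof -
    have "AE \<omega> in ?M. (\<lambda>n. (\<Sum>s<n. g v \<theta> (\<omega> s)) / real n) \<longlonglongrightarrow> KLdiv L S v \<theta>s \<theta>" for v \<theta>
    proof -
      have bnd: "\<bar>g v \<theta> x\<bar> \<le> (\<Sum>y\<in>UNIV. \<bar>g v \<theta> y\<bar>)" for x
        by (rule member_le_sum) auto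
      show ?thesis
        using slln[where P="L \<theta>s" and g="g v \<theta>", OF bnd] KL_expect[OF supp lik_pos, of \<theta>s v \<theta>] unfolding g_def by simp
    qed
    then show ?thesis by (simp add: AE_all_countable)
  qed
  have main: "AE \<omega> in ?M. (\<forall>i. (\<lambda>t. mu_belief L E \<pi>0 \<mu>0 \<omega> t i \<theta>s) \<longlonglongrightarrow> 1) \<and>
     (\<forall>i \<theta> v. ereal (KLdiv L S v \<theta>s \<theta>) \<le> Liminf sequentially (\<lambda>t. ereal (- ln (mu_belief L E \<pi>0 \<mu>0 \<omega> t i \<theta>) / real t)))"
    using AE1 AE2
  proof eventually_elim
    case (elim \<omega>)
    interpret D1: det L S E \<pi>0 \<mu>0 \<omega>
    proof unfold_locales
      show "\<omega> t i \<in> S i" for t i using elim(1) supp by blast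
    qed (use lik_pos pi0_prob mu0_prob pos0 in auto)
    interpret det2 L S E \<pi>0 \<mu>0 \<omega> \<theta>s "\<lambda>v \<theta>. KLdiv L S v \<theta>s \<theta>"
    proof unfold_locales
      show "(\<lambda>n. (\<Sum>s<n. ln (D1.lk v \<theta>s s) - ln (D1.lk v \<theta> s)) / real n) \<longlonglongrightarrow> KLdiv L S v \<theta>s \<theta>" for v \<theta>
        using elim(2) unfolding g_def D1.lk_def by simp
    qed (use KL_nonneg[OF supp lik_pos] strong in auto)
    have pos: "\<exists>v. KLdiv L S v \<theta>s \<theta> > 0" if "\<theta> \<noteq> \<theta>s" for \<theta>
      using ident[of \<theta>s \<theta>] that by (auto simp: informative_agents_def)
    show ?case
      using mu_one[OF pos] rate unfolding D1.mu_def by auto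
  qed
  show ?thesis
  proof (intro conjI allI impI)
    fix i show "AE \<omega> in ?M. (\<lambda>t. mu_belief L E \<pi>0 \<mu>0 \<omega> t i \<theta>s) \<longlonglongrightarrow> 1"
      using main by eventually_elim auto
  next
    fix i \<theta> assume ne: "\<theta> \<noteq> \<theta>s"
    have fin: "finite (informative_agents L S \<theta>s \<theta>)" by simp
    have nem: "informative_agents L S \<theta>s \<theta> \<noteq> {}" using ident ne by auto
    have "Max ((\<lambda>v. KLdiv L S v \<theta>s \<theta>) ` informative_agents L S \<theta>s \<theta>) \<in> (\<lambda>v. KLdiv L S v \<theta>s \<theta>) ` informative_agents L S \<theta>s \<theta>"
      by (rule Max_in) (use fin nem in auto)
    then obtain v where eqv: "Max ((\<lambda>v. KLdiv L S v \<theta>s \<theta>) ` informative_agents L S \<theta>s \<theta>) = KLdiv L S v \<theta>s \<theta>"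
      by blast
    show "AE \<omega> in ?M. Liminf sequentially (\<lambda>t. ereal (- ln (mu_belief L E \<pi>0 \<mu>0 \<omega> t i \<theta>) / real t))
                \<ge> ereal (Max ((\<lambda>v. KLdiv L S v \<theta>s \<theta>) ` informative_agents L S \<theta>s \<theta>))"
      using main by eventually_elim (use eqv in auto)
  qed
qed


end
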